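(* Let $\mathcal{P}=\{1,\dots,N\}$ and consider the family of systems $\dot x(t)=f_i(x(t))$, $i\in\mathcal{P}$, on $\mathbb{R}^d$, where each $f_i:\mathbb{R}^d\to\mathbb{R}^d$ is Lipschitz with $f_i(0)=0$. Let $\mathcal{P}=\mathcal{P}_S\sqcup\mathcal{P}_U$, and let $E(\mathcal{P})\subset\mathcal{P}\times\mathcal{P}$ be a set of admissible transitions. Suppose: (A1) there exist $\underline\alpha,\overline\alpha\in\mathcal{K}_\infty$, continuously differentiable functions $V_i:\mathbb{R}^d\to[0,+\infty[$, $i\in\mathcal{P}$, and constants $\lambda_i\in\mathbb{R}$ with $\lambda_i>0$ for $i\in\mathcal{P}_S$ and $\lambda_i<0$ for $i\in\mathcal{P}_U$, such that $\underline\alpha(\|\xi\|)\le V_i(\xi)\le\overline\alpha(\|\xi\|)$ for all $\xi\in\mathbb{R}^d$, $i\in\mathcal{P}$, and $V_i(\gamma_i(t))\le V_i(\gamma_i(0))\exp(-\lambda_i t)$ for all $t\ge0$ and every solution $\gamma_i$ of $\dot x=f_i(x)$; (A2) for every $(i,j)\in E(\mathcal{P})$ there is $\mu_{ij}\ge1$ with $V_j(\xi)\le\mu_{ij}V_i(\xi)$ for all $\xi\in\mathbb{R}^d$. Then for every admissible switching signal $\sigma$ satisfying \[ \varlimsup_{t\to+\infty}\Biggl(\nu(t)\sum_{(k,\ell)\in E(\mathcal{P})}(\ln\mu_{k\ell})\rho_{k\ell}(t)-\sum_{j\in\mathcal{P}_S}|\lambda_j|\eta_j(t)+\sum_{k\in\mathcal{P}_U}|\lambda_k|\eta_k(t)\Biggr)<0,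 \] the switched system $\dot x(t)=f_{\sigma(t)}(x(t))$, $x(0)=x_0$, $t\ge0$, is globally asymptotically stable.
   Context: An admissible switching signal is a piecewise constant, right-continuous map $\sigma:[0,+\infty[\to\mathcal{P}$ with left limits everywhere, whose jumps (switching instants $0=:\tau_0<\tau_1<\tau_2<\cdots$) are only along admissible transitions, i.e. $(\sigma(\tau_{i}),\sigma(\tau_{i+1}))\in E(\mathcal{P})$. $\mathcal{P}_S$ and $\mathcal{P}_U$ are the index sets of asymptotically stable and unstable subsystems respectively. $\mathrm{N}(s,t)$ is the number of switches on $]s,t]$; $\mathrm{N}_{k\ell}(0,t)$ is the number of switches from subsystem $k$ to subsystem $\ell$ in $]0,t]$; $\mathrm{T}_j(0,t)$ is the Lebesgue measure of the set of times in $]0,t]$ at which $\sigma=j$. For $t>0$: $\nu(t)=\mathrm{N}(0,t)/t$ (switching frequency), $\rho_{k\ell}(t)=\mathrm{N}_{k\ell}(0,t)/\mathrm{N}(0,t)$ (transition frequency), and $\eta_j(t)=\mathrm{T}_j(0,t)/t$ (fraction of activation); the product $\nu(t)\rho_{k\ell}(t)$ equals $\mathrm{N}_{k\ell}(0,t)/t$. The switched system is globally asymptotically stable (GAS) for $\sigma$ if it is Lyapunov stable and every solution converges to $0$ as $t\to+\infty$, i.e., there is a class-$\mathcal{KL}$ function $\beta_\sigma$ with $\|x(t)\|\le\beta_\sigma(\|x_0\|,t)$ for all $x_0$ and $t\ge0$. *)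

theory Defs
  imports "HOL-Analysis.Analysis"
begin

definition class_K :: "(real \<Rightarrow> real) \<Rightarrow> bool" where
  "class_K \<alpha> \<longleftrightarrow> continuous_on {0..} \<alpha> \<and> \<alpha> 0 = 0 \<and> strict_mono_on {0..} \<alpha>"

definition class_Kinf :: "(real \<Rightarrow> real) \<Rightarrow> bool" where
  "class_Kinf \<alpha> \<longleftrightarrow> class_K \<alpha> \<and> filterlim \<alpha> at_top at_top"

definition class_KL :: "(real \<Rightarrow> real \<Rightarrow> real) \<Rightarrow> bool" where
  "class_KL \<beta> \<longleftrightarrow>
     (\<forall>s\<ge>0. class_K (\<lambda>r. \<beta> r s)) \<and>
     (\<forall>r\<ge>0. (\<forall>s u. 0 \<le> s \<longrightarrow> s \<le> u \<longrightarrow> \<beta> r u \<le> \<beta> r s) \<and> ((\<beta> r) \<longlongrightarrow> 0) at_top)"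

definition ode_solution :: "('a::real_normed_vector \<Rightarrow> 'a) \<Rightarrow> (real \<Rightarrow> 'a) \<Rightarrow> bool" where
  "ode_solution g \<gamma> \<longleftrightarrow>
     (\<forall>t\<ge>0. (\<gamma> has_vector_derivative g (\<gamma> t)) (at t within {0..}))"

definition left_val :: "(real \<Rightarrow> nat) \<Rightarrow> real \<Rightarrow> nat" where
  "left_val \<sigma> s = (THE c. \<exists>e>0. \<forall>u\<in>{s-e<..<s}. \<sigma> u = c)"

definition is_switch :: "(real \<Rightarrow> nat) \<Rightarrow> real \<Rightarrow> bool" where
  "is_switch \<sigma> s \<longleftrightarrow> s > 0 \<and> left_val \<sigma> s \<noteq> \<sigma> s"

text \<open>Admissible switching signal: values in P, piecewise constant, right-continuous,
  with left limits everywhere (locally constant on both one-sided neighbourhoods, hence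
  only finitely many switches on bounded intervals), jumps only along E.\<close>
definition admissible_signal ::
  "nat set \<Rightarrow> (nat \<times> nat) set \<Rightarrow> (real \<Rightarrow> nat) \<Rightarrow> bool" where
  "admissible_signal P E \<sigma> \<longleftrightarrow>
     (\<forall>t\<ge>0. \<sigma> t \<in> P) \<and>
     (\<forall>t\<ge>0. \<exists>e>0. \<forall>u\<in>{t..<t+e}. \<sigma> u = \<sigma> t) \<and>
     (\<forall>t>0. \<exists>e>0. \<exists>c. \<forall>u\<in>{t-e<..<t}. \<sigma> u = c) \<and>
     (\<forall>t. is_switch \<sigma> t \<longrightarrow> (left_val \<sigma> t, \<sigma> t) \<in> E)"

definition num_switches :: "(real \<Rightarrow> nat) \<Rightarrow> real \<Rightarrow> nat" where
  "num_switches \<sigma> t = card {s\<in>{0<..t}. is_switch \<sigma> s}"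

definition num_switches_from_to :: "(real \<Rightarrow> nat) \<Rightarrow> nat \<Rightarrow> nat \<Rightarrow> real \<Rightarrow> nat" where
  "num_switches_from_to \<sigma> k l t =
     card {s\<in>{0<..t}. is_switch \<sigma> s \<and> left_val \<sigma> s = k \<and> \<sigma> s = l}"

definition activation_time :: "(real \<Rightarrow> nat) \<Rightarrow> nat \<Rightarrow> real \<Rightarrow> real" where
  "activation_time \<sigma> j t = measure lborel {s\<in>{0<..t}. \<sigma> s = j}"

definition switch_freq :: "(real \<Rightarrow> nat) \<Rightarrow> real \<Rightarrow> real" where
  "switch_freq \<sigma> t = real (num_switches \<sigma> t) / t"

definition trans_freq :: "(real \<Rightarrow> nat) \<Rightarrow> nat \<Rightarrow> nat \<Rightarrow> real \<Rightarrow> real" where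
  "trans_freq \<sigma> k l t = real (num_switches_from_to \<sigma> k l t) / real (num_switches \<sigma> t)"

definition activation_frac :: "(real \<Rightarrow> nat) \<Rightarrow> nat \<Rightarrow> real \<Rightarrow> real" where
  "activation_frac \<sigma> j t = activation_time \<sigma> j t / t"

text \<open>Solution of x' = f_sigma(t)(x), x(0) = x0 on [0,+infinity): continuous, and
  at every t the right derivative equals f_sigma(t)(x(t)) (sigma is right-continuous
  and piecewise constant).\<close>
definition switched_solution ::
  "(nat \<Rightarrow> 'a::real_normed_vector \<Rightarrow> 'a) \<Rightarrow> (real \<Rightarrow> nat) \<Rightarrow> 'a \<Rightarrow> (real \<Rightarrow> 'a) \<Rightarrow> bool" where
  "switched_solution f \<sigma> x0 x \<longleftrightarrow>
     x 0 = x0 \<and> continuous_on {0..} x \<and>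
     (\<forall>t\<ge>0. (x has_vector_derivative f (\<sigma> t) (x t)) (at t within {t..}))"

definition GAS :: "(nat \<Rightarrow> 'a::real_normed_vector \<Rightarrow> 'a) \<Rightarrow> (real \<Rightarrow> nat) \<Rightarrow> bool" where
  "GAS f \<sigma> \<longleftrightarrow>
     (\<exists>\<beta>. class_KL \<beta> \<and>
        (\<forall>x0 x. switched_solution f \<sigma> x0 x \<longrightarrow> (\<forall>t\<ge>0. norm (x t) \<le> \<beta> (norm x0) t)))"

end

theory Submission
  imports Defs "HOL-Real_Asymp.Real_Asymp"
begin

lemma local_exist:
  fixes g :: "'a::euclidean_space \<Rightarrow> 'a" and \<xi> :: 'a
  assumes lip: "L-lipschitz_on UNIV g" and h: "0 < h" "L * h < 1"
  shows "\<exists>\<phi>. continuous_on {0..h} \<phi> \<and> (\<forall>t\<in>{0..h}. \<phi> t = \<xi> + integral {0..t} (\<lambda>s. g (\<phi> s)))"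
proof -
  have L0: "0 \<le> L" using lip by (auto simp: lipschitz_on_def)
  have gc: "continuous_on UNIV g" using lip by (rule lipschitz_on_continuous_on)
  define cl :: "real \<Rightarrow> real" where "cl t = max 0 (min h t)" for t
  have cl_in: "cl t \<in> {0..h}" for t using h by (auto simp: cl_def)
  have cl_id: "t \<in> {0..h} \<Longrightarrow> cl t = t" for t by (auto simp: cl_def)
  have clc: "continuous_on UNIV cl" unfolding cl_def by (intro continuous_intros)
  define Pf :: "(real \<Rightarrow>\<^sub>C 'a) \<Rightarrow> real \<Rightarrow> 'a" where
    "Pf \<phi> t = \<xi> + integral {0..cl t} (\<lambda>s. g (apply_bcontfun \<phi> (cl s)))" for \<phi> t
  have icont: "continuous_on UNIV (\<lambda>s. g (apply_bcontfun \<phi> (cl s)))" for \<phi>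
    by (intro continuous_on_compose2[OF gc] continuous_on_compose2[OF continuous_on_apply_bcontfun clc]) auto
  have Gc: "continuous_on {0..h} (\<lambda>u. integral {0..u} (\<lambda>s. g (apply_bcontfun \<phi> (cl s))))" for \<phi>
    by (rule indefinite_integral_continuous_1, rule integrable_continuous_real, rule continuous_on_subset[OF icont]) auto
  have Pfc: "continuous_on UNIV (Pf \<phi>)" for \<phi>
    unfolding Pf_def
    by (intro continuous_intros continuous_on_compose2[OF Gc clc]) (use cl_in in auto)
  have Pfb: "bounded (range (Pf \<phi>))" for \<phi>
  proof -
    have "range (Pf \<phi>) \<subseteq> (\<lambda>u. \<xi> + integral {0..u} (\<lambda>s. g (apply_bcontfun \<phi> (cl s)))) ` {0..h}"
      unfolding Pf_def using cl_in by auto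
    moreover have "compact ((\<lambda>u. \<xi> + integral {0..u} (\<lambda>s. g (apply_bcontfun \<phi> (cl s)))) ` {0..h})"
      by (intro compact_continuous_image continuous_intros Gc) auto
    ultimately show ?thesis by (meson bounded_subset compact_imp_bounded)
  qed
  have Pin: "Pf \<phi> \<in> bcontfun" for \<phi> using Pfc Pfb by (auto simp: bcontfun_def)
  define P where "P \<phi> = Bcontfun (Pf \<phi>)" for \<phi>
  have Pap: "apply_bcontfun (P \<phi>) = Pf \<phi>" for \<phi> unfolding P_def using Pin by (simp add: Bcontfun_inverse)
  have contr: "dist (P \<phi>) (P \<psi>) \<le> (L*h) * dist \<phi> \<psi>" for \<phi> \<psi>
  proof (rule dist_bound)
    fix t
    have "dist (Pf \<phi> t) (Pf \<psi> t) = norm (integral {0..cl t} (\<lambda>s. g (apply_bcontfun \<phi> (cl s)) - g (apply_bcontfun \<psi> (cl s))))"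
      unfolding Pf_def dist_norm
      by (subst integral_diff) (auto intro!: integrable_continuous_real continuous_on_subset[OF icont])
    also have "\<dots> \<le> (L * dist \<phi> \<psi>) * (cl t - 0)"
    proof (rule integral_bound)
      show "0 \<le> cl t" using cl_in by auto
      show "continuous_on {0..cl t} (\<lambda>s. g (apply_bcontfun \<phi> (cl s)) - g (apply_bcontfun \<psi> (cl s)))"
        by (intro continuous_intros continuous_on_subset[OF icont]) auto
      fix s
      have "norm (g (apply_bcontfun \<phi> (cl s)) - g (apply_bcontfun \<psi> (cl s))) \<le> L * dist (apply_bcontfun \<phi> (cl s)) (apply_bcontfun \<psi> (cl s))"
        using lip by (auto simp: lipschitz_on_def dist_norm)
      also have "\<dots> \<le> L * dist \<phi> \<psi>" by (rule mult_left_mono[OF dist_bounded L0])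
      finally show "norm (g (apply_bcontfun \<phi> (cl s)) - g (apply_bcontfun \<psi> (cl s))) \<le> L * dist \<phi> \<psi>" .
    qed
    also have "\<dots> \<le> (L*h) * dist \<phi> \<psi>"
    proof -
      have "cl t * dist \<phi> \<psi> \<le> h * dist \<phi> \<psi>" using cl_in[of t] by (intro mult_right_mono) auto
      then have "L * (cl t * dist \<phi> \<psi>) \<le> L * (h * dist \<phi> \<psi>)" using L0 by (rule mult_left_mono)
      then show ?thesis by (simp add: ac_simps)
    qed
    finally show "dist (apply_bcontfun (P \<phi>) t) (apply_bcontfun (P \<psi>) t) \<le> (L*h) * dist \<phi> \<psi>"
      by (simp add: Pap)
  qed
  obtain \<phi> where fixp: "P \<phi> = \<phi>"
    using banach_fix_type[of "L*h" P] contr L0 h by (auto intro: mult_nonneg_nonneg)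
  show ?thesis
  proof (intro exI conjI ballI)
    show "continuous_on {0..h} (apply_bcontfun \<phi>)" by simp
    fix t assume t: "t \<in> {0..h}"
    have "apply_bcontfun \<phi> t = Pf \<phi> t" using fixp by (metis Pap)
    also have "\<dots> = \<xi> + integral {0..t} (\<lambda>s. g (apply_bcontfun \<phi> s))"
      unfolding Pf_def cl_id[OF t] by (intro arg_cong[where f="\<lambda>x. \<xi> + x"] integral_cong) (use t cl_id in auto)
    finally show "apply_bcontfun \<phi> t = \<xi> + integral {0..t} (\<lambda>s. g (apply_bcontfun \<phi> s))" .
  qed
qed

lemma global_exist:
  fixes g :: "'a::euclidean_space \<Rightarrow> 'a" and \<xi> :: 'a
  assumes lip: "L-lipschitz_on UNIV g"
  shows "\<exists>\<gamma>. ode_solution g \<gamma> \<and> \<gamma> 0 = \<xi>"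
proof -
  have L0: "0 \<le> L" using lip by (auto simp: lipschitz_on_def)
  have gc: "continuous_on UNIV g" using lip by (rule lipschitz_on_continuous_on)
  define h :: real where "h = 1 / (2 * (L + 1))"
  have h0: "0 < h" using L0 by (simp add: h_def)
  have Lh: "L * h < 1" using L0 by (simp add: h_def field_simps)
  define LS where "LS \<eta> \<phi> \<longleftrightarrow> continuous_on {0..h} \<phi> \<and> (\<forall>t\<in>{0..h}. \<phi> t = \<eta> + integral {0..t} (\<lambda>s. g (\<phi> s)))" for \<eta> \<phi>
  define loc where "loc \<eta> = (SOME \<phi>. LS \<eta> \<phi>)" for \<eta>
  have loc: "LS \<eta> (loc \<eta>)" for \<eta>
  proof -
    have "\<exists>\<phi>. LS \<eta> \<phi>" unfolding LS_def by (rule local_exist[OF lip h0 Lh])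
    then show ?thesis unfolding loc_def by (rule someI_ex)
  qed
  define seq :: "nat \<Rightarrow> real \<Rightarrow> 'a" where "seq = rec_nat (\<lambda>t. \<xi>)
     (\<lambda>n sn t. if t \<le> real n * h then sn t else loc (sn (real n * h)) (t - real n * h))"
  have seq0: "seq 0 = (\<lambda>t. \<xi>)" by (simp add: seq_def)
  have seqS: "seq (Suc n) t = (if t \<le> real n * h then seq n t else loc (seq n (real n * h)) (t - real n * h))" for n t
    by (simp add: seq_def)
  define I where "I n \<longleftrightarrow> continuous_on {0..real n * h} (seq n) \<and>
     (\<forall>t\<in>{0..real n * h}. seq n t = \<xi> + integral {0..t} (\<lambda>s. g (seq n s)))" for n
  have I: "I n" for n
  proof (induction n)
    case 0 then show ?case by (auto simp: I_def seq0)
  next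
    case (Suc n)
    define a where "a = real n * h"
    define \<psi> where "\<psi> = loc (seq n a)"
    have a0: "0 \<le> a" using h0 by (simp add: a_def)
    have aS: "real (Suc n) * h = a + h" by (simp add: a_def algebra_simps)
    have ps: "LS (seq n a) \<psi>" unfolding \<psi>_def by (rule loc)
    have ps0: "\<psi> 0 = seq n a" using ps h0 by (auto simp: LS_def)
    have sS: "seq (Suc n) t = (if t \<le> a then seq n t else \<psi> (t - a))" for t
      by (simp add: seqS a_def \<psi>_def)
    have sS2: "t \<ge> a \<Longrightarrow> seq (Suc n) t = \<psi> (t - a)" for t
      using ps0 by (cases "t = a") (auto simp: sS)
    have c1: "continuous_on {0..a} (seq (Suc n))"
      using Suc.IH by (auto simp: I_def a_def sS intro: continuous_on_eq)
    have cps: "continuous_on {a..a+h} (\<lambda>t. \<psi> (t - a))"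
      by (rule continuous_on_compose2[of "{0..h}" \<psi>]) (use ps in \<open>auto simp: LS_def intro!: continuous_intros\<close>)
    have c2: "continuous_on {a..a+h} (seq (Suc n))"
      by (rule continuous_on_eq[OF cps]) (auto simp: sS2)
    have cS: "continuous_on {0..a+h} (seq (Suc n))"
    proof -
      have "{0..a+h} = {0..a} \<union> {a..a+h}" using a0 h0 by auto
      then show ?thesis using continuous_on_closed_Un[OF _ _ c1 c2] by auto
    qed
    have gS: "continuous_on {0..a+h} (\<lambda>s. g (seq (Suc n) s))"
      by (rule continuous_on_compose2[OF gc cS]) auto
    show ?case unfolding I_def aS
    proof (intro conjI cS ballI)
      fix t assume t: "t \<in> {0..a+h}"
      show "seq (Suc n) t = \<xi> + integral {0..t} (\<lambda>s. g (seq (Suc n) s))"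
      proof (cases "t \<le> a")
        case True
        then have "seq (Suc n) t = seq n t" by (simp add: sS)
        also have "\<dots> = \<xi> + integral {0..t} (\<lambda>s. g (seq n s))"
          using Suc.IH True t by (auto simp: I_def a_def)
        also have "integral {0..t} (\<lambda>s. g (seq n s)) = integral {0..t} (\<lambda>s. g (seq (Suc n) s))"
          using True by (intro integral_cong) (auto simp: sS)
        finally show ?thesis .
      next
        case False
        have "seq (Suc n) t = \<psi> (t - a)" using False by (simp add: sS)
        also have "\<dots> = seq n a + integral {0..t-a} (\<lambda>s. g (\<psi> s))"
          using ps False t by (auto simp: LS_def)
        also have "seq n a = \<xi> + integral {0..a} (\<lambda>s. g (seq n s))"
          using Suc.IH a0 by (auto simp: I_def a_def)
        also have "integral {0..a} (\<lambda>s. g (seq n s)) = integral {0..a} (\<lambda>s. g (seq (Suc n) s))"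
          by (intro integral_cong) (auto simp: sS)
        also have "integral {0..t-a} (\<lambda>s. g (\<psi> s)) = integral {0..t-a} ((\<lambda>s. g (\<psi> (s - a))) \<circ> (\<lambda>x. x + a))"
          by (simp add: o_def)
        also have "\<dots> = integral {0+a..t-a+a} (\<lambda>s. g (\<psi> (s - a)))"
          by (rule integral_shift[where a=0 and b="t-a" and c=a], rule continuous_on_subset[OF continuous_on_compose2[OF gc cps]]) (use t in auto)
        also have "\<dots> = integral {a..t} (\<lambda>s. g (seq (Suc n) s))"
          by (simp, intro integral_cong) (auto simp: sS2)
        also have "\<xi> + integral {0..a} (\<lambda>s. g (seq (Suc n) s)) + integral {a..t} (\<lambda>s. g (seq (Suc n) s))
             = \<xi> + integral {0..t} (\<lambda>s. g (seq (Suc n) s))"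
        proof -
          have "(\<lambda>s. g (seq (Suc n) s)) integrable_on {0..t}"
            by (rule integrable_continuous_real, rule continuous_on_subset[OF gS]) (use t in auto)
          then show ?thesis using False t a0 Henstock_Kurzweil_Integration.integral_combine[of 0 a t "\<lambda>s. g (seq (Suc n) s)"] by (simp add: add.assoc)
        qed
        finally show ?thesis .
      qed
    qed
  qed
  have cons: "seq m t = seq n t" if "n \<le> m" "t \<in> {0..real n * h}" for m n t
    using that(1)
  proof (induction m)
    case 0 then show ?case by simp
  next
    case (Suc m)
    show ?case
    proof (cases "n = Suc m")
      case False
      then have nm: "n \<le> m" using Suc.prems by simp
      have "real n * h \<le> real m * h" using nm h0 by (simp add: mult_right_mono)
      then have "seq (Suc m) t = seq m t" using that(2) by (simp add: seqS)
      then show ?thesis using Suc.IH nm by simp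
    qed simp
  qed
  define nn where "nn t = nat \<lceil>t / h\<rceil>" for t
  have nn: "t \<le> real (nn t) * h" for t
  proof -
    have "t / h \<le> real (nn t)" unfolding nn_def by linarith
    then show ?thesis using h0 by (simp add: field_simps)
  qed
  define \<gamma> where "\<gamma> t = seq (nn t) t" for t
  have \<gamma>seq: "\<gamma> t = seq m t" if "0 \<le> t" "t \<le> real m * h" for t m
  proof -
    have "seq (max m (nn t)) t = seq m t" using that by (intro cons) auto
    moreover have "seq (max m (nn t)) t = seq (nn t) t" using that nn[of t] by (intro cons) auto
    ultimately show ?thesis by (simp add: \<gamma>_def)
  qed
  show ?thesis
  proof (intro exI conjI)
    show "\<gamma> 0 = \<xi>" using \<gamma>seq[of 0 0] by (simp add: seq0)
    show "ode_solution g \<gamma>" unfolding ode_solution_def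
    proof (intro allI impI)
      fix t :: real assume t: "0 \<le> t"
      define m where "m = nn (t + 1)"
      have tm: "t + 1 \<le> real m * h" using nn unfolding m_def by blast
      have Im: "I m" by (rule I)
      have gm: "continuous_on {0..real m * h} (\<lambda>s. g (seq m s))"
        using Im by (auto simp: I_def intro: continuous_on_compose2[OF gc])
      have "((\<lambda>u. \<xi> + integral {0..u} (\<lambda>s. g (seq m s))) has_vector_derivative g (seq m t)) (at t within {0..real m * h})"
        using has_vector_derivative_add[OF has_vector_derivative_const integral_has_vector_derivative[OF gm, of t], of \<xi>] t tm by simp
      then have "(\<gamma> has_vector_derivative g (seq m t)) (at t within {0..real m * h})"
      proof (rule has_vector_derivative_transform[rotated 2])
        show "t \<in> {0..real m * h}" using t tm by auto
        fix x assume x: "x \<in> {0..real m * h}"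
        then show "\<gamma> x = \<xi> + integral {0..x} (\<lambda>s. g (seq m s))"
          using Im \<gamma>seq[of x m] by (auto simp: I_def)
      qed
      moreover have "\<gamma> t = seq m t" using \<gamma>seq[of t m] t tm by auto
      ultimately have "(\<gamma> has_vector_derivative g (\<gamma> t)) (at t within {0..real m * h})" by simp
      moreover have "at t within {0..real m * h} = at t within {0..}"
        by (rule at_within_nhd[where S="{..<real m * h}"]) (use t tm in auto)
      ultimately show "(\<gamma> has_vector_derivative g (\<gamma> t)) (at t within {0..})" by simp
    qed
  qed
qed

lemma mono_right:
  fixes g :: "real \<Rightarrow> real"
  assumes ab: "a \<le> b" and gc: "continuous_on {a..b} g"
    and dv: "\<And>v. v \<in> {a..<b} \<Longrightarrow> \<exists>d. (g has_real_derivative d) (at v within {v..}) \<and> d \<le> 0"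
  shows "g b \<le> g a"
proof -
  have main: "g b - \<epsilon> * (b - a) \<le> g a" if \<epsilon>: "0 < \<epsilon>" for \<epsilon>
  proof -
    define h where "h v = g v - \<epsilon> * (v - a)" for v
    have hc: "continuous_on {a..b} h" unfolding h_def by (intro continuous_intros gc)
    define S where "S = {t\<in>{a..b}. \<forall>u\<in>{a..t}. h u \<le> h a}"
    have aS: "a \<in> S" using ab by (auto simp: S_def)
    have bdd: "bdd_above S" by (auto simp: S_def bdd_above_def)
    define s where "s = Sup S"
    have as: "a \<le> s" unfolding s_def using aS bdd by (rule cSup_upper)
    have sb: "s \<le> b" unfolding s_def using aS by (intro cSup_least) (auto simp: S_def)
    have A: "h u \<le> h a" if "u \<in> {a..<s}" for u
    proof -
      have "u < Sup S" using that by (simp add: s_def)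
      then obtain t where "t \<in> S" "u < t" using less_cSup_iff[OF _ bdd] aS by blast
      then show ?thesis using that by (auto simp: S_def)
    qed
    have B: "h s \<le> h a"
    proof (rule ccontr)
      assume nB: "\<not> h s \<le> h a"
      then have sa: "a < s" using as by (cases "s = a") auto
      have "(h \<longlongrightarrow> h s) (at s within {a..b})"
        using hc as sb by (auto simp: continuous_on_def)
      then have "eventually (\<lambda>u. h u > h a) (at s within {a..b})"
        using nB by (intro order_tendstoD(1)) auto
      then obtain d where d: "d > 0" "\<And>u. u \<in> {a..b} \<Longrightarrow> u \<noteq> s \<Longrightarrow> dist u s < d \<Longrightarrow> h u > h a"
        unfolding eventually_at by blast
      define u where "u = max a (s - d/2)"
      have "h u > h a" using d sa sb by (intro d(2)) (auto simp: u_def dist_real_def)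
      moreover have "h u \<le> h a" using A[of u] d sa by (auto simp: u_def)
      ultimately show False by simp
    qed
    have C: "s = b"
    proof (rule ccontr)
      assume "s \<noteq> b"
      then have sb': "s < b" using sb by simp
      obtain d where d: "(g has_real_derivative d) (at s within {s..})" "d \<le> 0"
        using dv[of s] as sb' by auto
      have "(h has_real_derivative (d - \<epsilon>)) (at s within {s..})"
        unfolding h_def using d(1) by (auto intro!: derivative_eq_intros)
      then obtain \<delta> where \<delta>: "\<delta> > 0" "\<And>k. k > 0 \<Longrightarrow> s + k \<in> {s..} \<Longrightarrow> k < \<delta> \<Longrightarrow> h s > h (s + k)"
        using has_real_derivative_neg_dec_right[of h "d - \<epsilon>" s "{s..}"] d(2) \<epsilon> by force
      define t where "t = min (s + \<delta>/2) b"
      have "t \<in> S"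
        unfolding S_def
      proof (intro CollectI conjI ballI)
        show "t \<in> {a..b}" using as sb' \<delta> by (auto simp: t_def)
        fix u assume u: "u \<in> {a..t}"
        show "h u \<le> h a"
        proof (cases "u < s")
          case True then show ?thesis using A u by auto
        next
          case False
          show ?thesis
          proof (cases "u = s")
            case True then show ?thesis using B by simp
          next
            case False
            then have "h s > h (s + (u - s))" using \<open>\<not> u < s\<close> u \<delta> by (intro \<delta>(2)) (auto simp: t_def)
            then show ?thesis using B by simp
          qed
        qed
      qed
      then have "t \<le> s" unfolding s_def using bdd by (rule cSup_upper)
      then show False using sb' \<delta> by (auto simp: t_def)
    qed
    have "h b \<le> h a" using B C by simp
    then show ?thesis by (simp add: h_def)
  qed
  show ?thesis
  proof (rule field_le_epsilon)
    fix e :: real assume e: "0 < e"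
    have "g b - (e / (b - a + 1)) * (b - a) \<le> g a" using e ab by (intro main) auto
    moreover have "(e / (b - a + 1)) * (b - a) \<le> e"
      using e ab by (simp add: field_simps)
    ultimately show "g b \<le> g a + e" by simp
  qed
qed

lemma infinitesimal:
  fixes V :: "'a::euclidean_space \<Rightarrow> real" and g :: "'a \<Rightarrow> 'a"
  assumes VD: "(V has_derivative D) (at \<xi>)"
    and ex: "\<exists>\<gamma>. ode_solution g \<gamma> \<and> \<gamma> 0 = \<xi>"
    and dec: "\<forall>\<gamma>. ode_solution g \<gamma> \<longrightarrow> (\<forall>t\<ge>0. V (\<gamma> t) \<le> V (\<gamma> 0) * exp (- lam * t))"
  shows "D (g \<xi>) \<le> - lam * V \<xi>"
proof (rule ccontr)
  assume nc: "\<not> D (g \<xi>) \<le> - lam * V \<xi>"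
  obtain \<gamma> where \<gamma>: "ode_solution g \<gamma>" "\<gamma> 0 = \<xi>" using ex by blast
  have d\<gamma>: "(\<gamma> has_vector_derivative g \<xi>) (at 0 within {0..})"
    using \<gamma> unfolding ode_solution_def by auto
  have "((V \<circ> \<gamma>) has_vector_derivative D (g \<xi>)) (at 0 within {0..})"
    by (rule vector_derivative_diff_chain_within[OF d\<gamma>]) (use VD \<gamma>(2) in \<open>auto intro: has_derivative_at_withinI\<close>)
  then have "((\<lambda>t. V (\<gamma> t)) has_real_derivative D (g \<xi>)) (at 0 within {0..})"
    by (simp add: has_real_derivative_iff_has_vector_derivative o_def)
  then have "((\<lambda>t. V (\<gamma> t) - V \<xi> * exp (- lam * t)) has_real_derivative (D (g \<xi>) - V \<xi> * (exp (- lam * 0) * (- lam)))) (at 0 within {0..})"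
    by (intro derivative_eq_intros) auto
  then have der: "((\<lambda>t. V (\<gamma> t) - V \<xi> * exp (- lam * t)) has_real_derivative (D (g \<xi>) + lam * V \<xi>)) (at 0 within {0..})"
    by (simp add: algebra_simps)
  obtain \<delta> where \<delta>: "\<delta> > 0" "\<And>k. k > 0 \<Longrightarrow> 0 + k \<in> {0..} \<Longrightarrow> k < \<delta> \<Longrightarrow>
       V (\<gamma> 0) - V \<xi> * exp (- lam * 0) < V (\<gamma> (0 + k)) - V \<xi> * exp (- lam * (0 + k))"
    using has_real_derivative_pos_inc_right[OF der] nc by force
  have "V (\<gamma> 0) - V \<xi> * exp (- lam * 0) < V (\<gamma> (0 + \<delta>/2)) - V \<xi> * exp (- lam * (0 + \<delta>/2))"
    using \<delta> by (intro \<delta>(2)) auto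
  moreover have "V (\<gamma> (\<delta>/2)) \<le> V (\<gamma> 0) * exp (- lam * (\<delta>/2))"
    using dec \<gamma>(1) \<delta>(1) by (metis half_gt_zero less_eq_real_def)
  ultimately show False using \<gamma>(2) by simp
qed

lemma left_val_eq:
  assumes "e > 0" "\<forall>v\<in>{u-e<..<u}. \<sigma> v = c"
  shows "left_val \<sigma> u = c"
  unfolding left_val_def
proof (rule the_equality)
  show "\<exists>e>0. \<forall>v\<in>{u - e<..<u}. \<sigma> v = c" using assms by blast
next
  fix c' assume "\<exists>e>0. \<forall>v\<in>{u - e<..<u}. \<sigma> v = c'"
  then obtain e' where e': "e' > 0" "\<forall>v\<in>{u - e'<..<u}. \<sigma> v = c'" by blast
  define v where "v = u - min e e' / 2"
  have "\<sigma> v = c'" using e' assms(1) by (intro e'(2)[rule_format]) (auto simp: v_def)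
  moreover have "\<sigma> v = c" using e' assms by (intro assms(2)[rule_format]) (auto simp: v_def)
  ultimately show "c' = c" by simp
qed

lemma const_no_switch:
  assumes "\<forall>r\<in>{u<..<v}. \<sigma> r = c" "w \<in> {u<..<v}"
  shows "\<not> is_switch \<sigma> w"
proof -
  have "left_val \<sigma> w = c" using assms by (intro left_val_eq[of "w - u"]) auto
  moreover have "\<sigma> w = c" using assms by auto
  ultimately show ?thesis by (simp add: is_switch_def)
qed

lemma adm_R: "admissible_signal P E \<sigma> \<Longrightarrow> t \<ge> 0 \<Longrightarrow> \<exists>e>0. \<forall>u\<in>{t..<t+e}. \<sigma> u = \<sigma> t"
  unfolding admissible_signal_def by (drule conjunct2, drule conjunct1) simp
lemma adm_L: "admissible_signal P E \<sigma> \<Longrightarrow> t > 0 \<Longrightarrow> \<exists>e>0. \<exists>c. \<forall>u\<in>{t-e<..<t}. \<sigma> u = c"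
  unfolding admissible_signal_def by (drule conjunct2, drule conjunct2, drule conjunct1) simp
lemma adm_P: "admissible_signal P E \<sigma> \<Longrightarrow> t \<ge> 0 \<Longrightarrow> \<sigma> t \<in> P"
  unfolding admissible_signal_def by (drule conjunct1) simp
lemma adm_E: "admissible_signal P E \<sigma> \<Longrightarrow> is_switch \<sigma> t \<Longrightarrow> (left_val \<sigma> t, \<sigma> t) \<in> E"
  unfolding admissible_signal_def by (drule conjunct2, drule conjunct2, drule conjunct2) simp

lemma iso_switch:
  assumes adm: "admissible_signal P E \<sigma>" and t: "t \<ge> 0"
  shows "\<exists>e>0. \<forall>s. is_switch \<sigma> s \<and> dist s t < e \<longrightarrow> s = t"
proof -
  obtain e1 where e1: "e1 > 0" "\<forall>u\<in>{t..<t+e1}. \<sigma> u = \<sigma> t" using adm_R[OF adm t] by blast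
  have R: "\<not> is_switch \<sigma> s" if "s \<in> {t<..<t+e1}" for s
  proof (rule const_no_switch[of t "t+e1" \<sigma> "\<sigma> t"])
    show "\<forall>r\<in>{t<..<t + e1}. \<sigma> r = \<sigma> t"
    proof
      fix r assume "r \<in> {t<..<t + e1}"
      then have "r \<in> {t..<t + e1}" by simp
      then show "\<sigma> r = \<sigma> t" using e1(2) by blast
    qed
  qed (rule that)
  show ?thesis
  proof (cases "t = 0")
    case True
    show ?thesis
    proof (intro exI[of _ e1] conjI allI impI)
      fix s assume s: "is_switch \<sigma> s \<and> dist s t < e1"
      then have "s > 0" by (simp add: is_switch_def)
      then have "s \<in> {t<..<t+e1}" using s True by (simp add: dist_real_def)
      then show "s = t" using R[of s] s by simp
    qed (rule e1(1))
  next
    case False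
    then have t0: "t > 0" using t by simp
    obtain e2 c where e2: "e2 > 0" "\<forall>u\<in>{t-e2<..<t}. \<sigma> u = c" using adm_L[OF adm t0] by blast
    have L: "\<not> is_switch \<sigma> s" if "s \<in> {t-e2<..<t}" for s
      by (rule const_no_switch[OF e2(2) that])
    show ?thesis
    proof (intro exI[of _ "min e1 e2"] conjI allI impI)
      fix s assume s: "is_switch \<sigma> s \<and> dist s t < min e1 e2"
      show "s = t"
      proof (rule ccontr)
        assume "s \<noteq> t"
        then have "s \<in> {t<..<t+e1} \<or> s \<in> {t-e2<..<t}" using s by (auto simp: dist_real_def)
        then show False
        proof
          assume "s \<in> {t<..<t+e1}" then show False using R[of s] s by simp
        next
          assume "s \<in> {t-e2<..<t}" then show False using L[of s] s by simp
        qed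
      qed
    next
      show "0 < min e1 e2" using e1(1) e2(1) by simp
    qed
  qed
qed

lemma finite_switches:
  assumes adm: "admissible_signal P E \<sigma>"
  shows "finite {s\<in>{0<..t}. is_switch \<sigma> s}"
proof -
  define ee where "ee p = (SOME e. e > 0 \<and> (\<forall>s. is_switch \<sigma> s \<and> dist s p < e \<longrightarrow> s = p))" for p
  have ee: "ee p > 0 \<and> (\<forall>s. is_switch \<sigma> s \<and> dist s p < ee p \<longrightarrow> s = p)" if "p \<ge> 0" for p
    unfolding ee_def by (rule someI_ex, rule iso_switch[OF adm that])
  have "compact {0..t}" by simp
  then obtain C' where C': "C' \<subseteq> {0..t}" "finite C'" "{0..t} \<subseteq> (\<Union>c\<in>C'. ball c (ee c))"
  proof (rule compactE_image[of "{0..t}" "{0..t}" "\<lambda>p. ball p (ee p)"])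
    show "{0..t} \<subseteq> (\<Union>c\<in>{0..t}. ball c (ee c))"
    proof
      fix p assume p: "p \<in> {0..t}"
      then have "p \<in> ball p (ee p)" using ee[of p] by simp
      then show "p \<in> (\<Union>c\<in>{0..t}. ball c (ee c))" using p by blast
    qed
  qed auto
  have "{s\<in>{0<..t}. is_switch \<sigma> s} \<subseteq> C'"
  proof
    fix s assume s: "s \<in> {s\<in>{0<..t}. is_switch \<sigma> s}"
    then have "s \<in> {0..t}" by auto
    then obtain c where c: "c \<in> C'" "s \<in> ball c (ee c)" using C'(3) by blast
    then have "c \<ge> 0" using C'(1) by auto
    then have "s = c" using ee[of c] c s by (auto simp: dist_commute)
    then show "s \<in> C'" using c by simp
  qed
  then show ?thesis by (rule finite_subset[OF _ C'(2)])
qed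

lemma act_set_meas:
  assumes adm: "admissible_signal P E \<sigma>"
  shows "{r\<in>{0<..t}. \<sigma> r = j} \<in> sets lborel"
proof -
  define S where "S = {r\<in>{0<..t}. \<sigma> r = j}"
  define F where "F = insert t {s\<in>{0<..t}. is_switch \<sigma> s}"
  have fF: "finite F" using finite_switches[OF adm] by (simp add: F_def)
  have "S \<subseteq> interior S \<union> (S \<inter> F)"
  proof
    fix r assume r: "r \<in> S"
    show "r \<in> interior S \<union> (S \<inter> F)"
    proof (cases "r \<in> F")
      case False
      then have r0: "0 < r" "r < t" "\<not> is_switch \<sigma> r" "\<sigma> r = j" using r by (auto simp: S_def F_def)
      obtain e1 where e1': "e1 > 0" "\<forall>u\<in>{r..<r+e1}. \<sigma> u = \<sigma> r" using adm_R[OF adm, of r] r0 by auto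
      have e1: "e1 > 0" "\<forall>u\<in>{r..<r+e1}. \<sigma> u = j" using e1' r0(4) by metis+
      obtain e2 c where e2: "e2 > 0" "\<forall>u\<in>{r-e2<..<r}. \<sigma> u = c" using adm_L[OF adm r0(1)] by blast
      have "left_val \<sigma> r = c" by (rule left_val_eq[OF e2])
      then have cj: "c = j" using r0 by (auto simp: is_switch_def)
      define e where "e = min (min e1 e2) (min r (t - r))"
      have e0: "e > 0" using e1 e2 r0 by (auto simp: e_def)
      have "ball r e \<subseteq> S"
      proof
        fix u assume "u \<in> ball r e"
        then have u: "r - e < u" "u < r + e" by (auto simp: dist_real_def)
        have "\<sigma> u = j"
        proof (cases "u < r")
          case True then show ?thesis using e2 cj u by (auto simp: e_def)
        next
          case False then show ?thesis using e1 r0 u by (auto simp: e_def)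
        qed
        then show "u \<in> S" using u by (auto simp: S_def e_def)
      qed
      then have "r \<in> interior S" using e0 by (meson interiorI open_ball centre_in_ball)
      then show ?thesis by simp
    qed (use r in auto)
  qed
  then have "S = interior S \<union> (S \<inter> F)" using interior_subset by blast
  moreover have "interior S \<in> sets borel" by simp
  moreover have "S \<inter> F \<in> sets borel" using fF by (intro borel_closed finite_imp_closed) auto
  ultimately have "S \<in> sets borel" by (metis sets.Un)
  then show ?thesis by (simp add: S_def)
qed

lemma act_set_fmeas:
  assumes adm: "admissible_signal P E \<sigma>"
  shows "{r\<in>{0<..t}. \<sigma> r = j} \<in> fmeasurable lborel"
proof (rule fmeasurableI[OF act_set_meas[OF adm]])
  have "bounded {r\<in>{0<..t}. \<sigma> r = j}" by (rule bounded_subset[of "{0..t}"]) auto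
  then show "emeasure lborel {r\<in>{0<..t}. \<sigma> r = j} < \<infinity>" by (rule emeasure_bounded_finite)
qed

lemma act_step:
  assumes adm: "admissible_signal P E \<sigma>" and uv: "0 \<le> u" "u \<le> v"
    and c: "\<forall>r\<in>{u<..<v}. \<sigma> r = c"
  shows "activation_time \<sigma> j v = activation_time \<sigma> j u + (if c = j then v - u else 0)"
proof -
  define Au where "Au = {r\<in>{0<..u}. \<sigma> r = j}"
  define Av where "Av = {r\<in>{0<..v}. \<sigma> r = j}"
  define D where "D = Av - Au"
  have fAu: "Au \<in> fmeasurable lborel" unfolding Au_def by (rule act_set_fmeas[OF adm])
  have fAv: "Av \<in> fmeasurable lborel" unfolding Av_def by (rule act_set_fmeas[OF adm])
  have fD: "D \<in> fmeasurable lborel" unfolding D_def using fAu fAv by (rule fmeasurable.Diff[rotated])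
  have Dset: "D = {r\<in>{u<..v}. \<sigma> r = j}" using uv by (auto simp: D_def Av_def Au_def)
  have "Av = Au \<union> D" using uv by (auto simp: D_def Av_def Au_def)
  then have "measure lborel Av = measure lborel Au + measure lborel (D - Au)"
    using measure_Un2[OF fAu fD] by simp
  moreover have "D - Au = D" by (auto simp: D_def)
  moreover have "measure lborel D = (if c = j then v - u else 0)"
  proof (cases "c = j")
    case True
    have "measure lborel {u<..<v} \<le> measure lborel D"
      using c True by (intro measure_mono_fmeasurable[OF _ _ fD]) (auto simp: Dset)
    moreover have "measure lborel D \<le> measure lborel {u<..v}"
    proof (rule measure_mono_fmeasurable)
      show "D \<subseteq> {u<..v}" by (auto simp: Dset)
      show "D \<in> sets lborel" using fD by (rule fmeasurableD)
      have "bounded {u<..v}" by (rule bounded_subset[of "{u..v}"]) auto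
      then show "{u<..v} \<in> fmeasurable lborel" by (intro fmeasurableI emeasure_bounded_finite) auto
    qed
    ultimately show ?thesis using True uv by simp
  next
    case False
    have "D \<subseteq> {v}" using c False by (auto simp: Dset)
    then have "measure lborel D \<le> measure lborel {v}"
      using fD by (intro measure_mono_fmeasurable) (auto simp: fmeasurableI)
    then show ?thesis using False by (simp add: measure_nonneg antisym)
  qed
  ultimately show ?thesis by (simp add: activation_time_def Av_def Au_def)
qed

lemma nsw_same:
  assumes "u \<le> v" "\<forall>r\<in>{u<..v}. \<not> is_switch \<sigma> r"
  shows "num_switches_from_to \<sigma> k l v = num_switches_from_to \<sigma> k l u"
proof -
  have "{s\<in>{0<..v}. is_switch \<sigma> s \<and> left_val \<sigma> s = k \<and> \<sigma> s = l} = {s\<in>{0<..u}. is_switch \<sigma> s \<and> left_val \<sigma> s = k \<and> \<sigma> s = l}"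
    using assms by force
  then show ?thesis by (simp add: num_switches_from_to_def)
qed

lemma nsw_step:
  assumes adm: "admissible_signal P E \<sigma>" and "0 \<le> u" "u < v" "\<forall>r\<in>{u<..<v}. \<not> is_switch \<sigma> r"
  shows "num_switches_from_to \<sigma> k l v = num_switches_from_to \<sigma> k l u
     + (if is_switch \<sigma> v \<and> left_val \<sigma> v = k \<and> \<sigma> v = l then 1 else 0)"
proof -
  define Su where "Su = {s\<in>{0<..u}. is_switch \<sigma> s \<and> left_val \<sigma> s = k \<and> \<sigma> s = l}"
  define Sv where "Sv = {s\<in>{0<..v}. is_switch \<sigma> s \<and> left_val \<sigma> s = k \<and> \<sigma> s = l}"
  define X where "X = (if is_switch \<sigma> v \<and> left_val \<sigma> v = k \<and> \<sigma> v = l then {v} else {})"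
  have fin: "finite Su" unfolding Su_def by (rule finite_subset[OF _ finite_switches[OF adm, of u]]) auto
  have sw: "s \<le> u \<or> s = v" if "s \<in> {0<..v}" "is_switch \<sigma> s" for s
  proof (rule ccontr)
    assume "\<not> (s \<le> u \<or> s = v)"
    then have "s \<in> {u<..<v}" using that by auto
    then show False using assms(4) that by blast
  qed
  have "Sv = Su \<union> X" using assms sw by (auto simp: Sv_def Su_def X_def)
  moreover have "Su \<inter> X = {}" using assms by (auto simp: Su_def X_def)
  ultimately have "card Sv = card Su + card X" using fin by (simp add: card_Un_disjoint X_def)
  then show ?thesis by (simp add: num_switches_from_to_def Sv_def Su_def X_def)
qed

lemma Kinf_inv:
  assumes A: "class_Kinf \<alpha>"
  shows "\<exists>ai. (\<forall>y\<ge>0. ai y \<ge> 0 \<and> \<alpha> (ai y) = y) \<and>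
    (\<forall>r\<ge>0. ai (\<alpha> r) = r) \<and> continuous_on {0..} ai \<and> strict_mono_on {0..} ai \<and> ai 0 = 0"
proof -
  have ac: "continuous_on {0..} \<alpha>" and a0: "\<alpha> 0 = 0" and am: "strict_mono_on {0..} \<alpha>"
    and at: "filterlim \<alpha> at_top at_top" using A by (auto simp: class_Kinf_def class_K_def)
  have big: "\<exists>R\<ge>0. \<alpha> R > y" for y
  proof -
    have "eventually (\<lambda>r. \<alpha> r > y) at_top" using at by (simp add: filterlim_at_top_dense)
    then obtain R where "\<forall>r\<ge>R. \<alpha> r > y" by (auto simp: eventually_at_top_linorder)
    then show ?thesis by (intro exI[of _ "max R 0"]) auto
  qed
  have ex: "\<exists>r. r \<ge> 0 \<and> \<alpha> r = y" if "y \<ge> 0" for y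
  proof -
    obtain R where R: "R \<ge> 0" "\<alpha> R > y" using big by blast
    have "\<exists>x. 0 \<le> x \<and> x \<le> R \<and> \<alpha> x = y"
      by (rule IVT') (use that R a0 in \<open>auto intro: continuous_on_subset[OF ac]\<close>)
    then show ?thesis by blast
  qed
  have inj: "r1 = r2" if "r1 \<ge> 0" "r2 \<ge> 0" "\<alpha> r1 = \<alpha> r2" for r1 r2
  proof (rule ccontr)
    assume "r1 \<noteq> r2"
    then consider "r1 < r2" | "r2 < r1" by linarith
    then show False using strict_mono_onD[OF am, of r1 r2] strict_mono_onD[OF am, of r2 r1] that by cases auto
  qed
  define ai where "ai y = (THE r. r \<ge> 0 \<and> \<alpha> r = y)" for y
  have ai: "ai y \<ge> 0 \<and> \<alpha> (ai y) = y" if "y \<ge> 0" for y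
    unfolding ai_def by (rule theI') (use ex[OF that] inj in blast)
  have ai2: "ai (\<alpha> r) = r" if "r \<ge> 0" for r
    unfolding ai_def by (rule the_equality) (use that inj in auto)
  have apos: "\<alpha> r \<ge> 0" if "r \<ge> 0" for r using strict_mono_on_leD[OF am, of 0 r] that a0 by auto
  have aim: "strict_mono_on {0..} ai"
  proof (rule strict_mono_onI)
    fix y1 y2 :: real assume y: "y1 \<in> {0..}" "y2 \<in> {0..}" "y1 < y2"
    show "ai y1 < ai y2"
    proof (rule ccontr)
      assume "\<not> ai y1 < ai y2"
      then have "\<alpha> (ai y2) \<le> \<alpha> (ai y1)" using ai y by (intro strict_mono_on_leD[OF am]) auto
      then show False using ai y by auto
    qed
  qed
  have aic: "continuous_on {0..} ai"
  proof (rule continuous_on_eq_continuous_within[THEN iffD2], rule ballI)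
    fix y :: real assume y: "y \<in> {0..}"
    obtain R where R: "R \<ge> 0" "\<alpha> R > y" using big by blast
    have img: "\<alpha> ` {0..R} = {0..\<alpha> R}"
    proof
      show "\<alpha> ` {0..R} \<subseteq> {0..\<alpha> R}" using apos strict_mono_on_leD[OF am] by auto
      show "{0..\<alpha> R} \<subseteq> \<alpha> ` {0..R}"
      proof
        fix z assume z: "z \<in> {0..\<alpha> R}"
        have "\<exists>x. 0 \<le> x \<and> x \<le> R \<and> \<alpha> x = z"
          by (rule IVT') (use z R a0 in \<open>auto intro: continuous_on_subset[OF ac]\<close>)
        then show "z \<in> \<alpha> ` {0..R}" by auto
      qed
    qed
    have "continuous_on (\<alpha> ` {0..R}) ai"
      by (rule continuous_on_inv) (use ai2 in \<open>auto intro: continuous_on_subset[OF ac]\<close>)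
    then have "continuous_on {0..\<alpha> R} ai" using img by simp
    then have "continuous (at y within {0..\<alpha> R}) ai" using y R
      by (simp add: continuous_on_eq_continuous_within)
    moreover have "at y within {0..\<alpha> R} = at y within {0..}"
      by (rule at_within_nhd[where S="{..<\<alpha> R}"]) (use y R in auto)
    ultimately show "continuous (at y within {0..}) ai" by simp
  qed
  have z: "ai 0 = 0" using ai2[of 0] a0 by simp
  have c1: "\<forall>y\<ge>0. ai y \<ge> 0 \<and> \<alpha> (ai y) = y" using ai by blast
  have c2: "\<forall>r\<ge>0. ai (\<alpha> r) = r" using ai2 by blast
  show ?thesis by (intro exI[of _ ai] conjI c1 c2 aim aic z)
qed

lemma KL_build:
  assumes al: "class_Kinf \<alpha>l" and au: "class_Kinf \<alpha>u" and c: "c > 0"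
  shows "\<exists>\<beta>. class_KL \<beta> \<and> (\<forall>r t y. r \<ge> 0 \<longrightarrow> t \<ge> 0 \<longrightarrow> y \<ge> 0 \<longrightarrow> \<alpha>l y \<le> \<alpha>u r * exp (K - c * t) \<longrightarrow> y \<le> \<beta> r t)"
proof -
  from Kinf_inv[OF al] obtain ai where aiA: "(\<forall>y\<ge>0. ai y \<ge> 0 \<and> \<alpha>l (ai y) = y) \<and>
    (\<forall>r\<ge>0. ai (\<alpha>l r) = r) \<and> continuous_on {0..} ai \<and> strict_mono_on {0..} ai \<and> ai 0 = 0"
    by (rule exE)
  have ai: "\<And>y. y \<ge> 0 \<Longrightarrow> ai y \<ge> 0 \<and> \<alpha>l (ai y) = y"
    "\<And>r. r \<ge> 0 \<Longrightarrow> ai (\<alpha>l r) = r" "continuous_on {0..} ai" "strict_mono_on {0..} ai" "ai 0 = 0"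
    using aiA by auto
  have uc: "continuous_on {0..} \<alpha>u" and u0: "\<alpha>u 0 = 0" and um: "strict_mono_on {0..} \<alpha>u"
    using au by (auto simp: class_Kinf_def class_K_def)
  have lm: "strict_mono_on {0..} \<alpha>l" and l0: "\<alpha>l 0 = 0"
    using al by (auto simp: class_Kinf_def class_K_def)
  have lpos: "\<alpha>l y \<ge> 0" if "y \<ge> 0" for y using strict_mono_on_leD[OF lm, of 0 y] that l0 by auto
  have upos: "\<alpha>u r \<ge> 0" if "r \<ge> 0" for r using strict_mono_on_leD[OF um, of 0 r] that u0 by auto
  define \<beta> where "\<beta> r t = ai (\<alpha>u r * exp (K - c * t))" for r t
  have KL1: "class_K (\<lambda>r. \<beta> r t)" if t: "0 \<le> t" for t
    unfolding class_K_def
  proof (intro conjI)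
    show "continuous_on {0..} (\<lambda>r. \<beta> r t)" unfolding \<beta>_def
    proof (rule continuous_on_compose2[OF ai(3)])
      show "continuous_on {0..} (\<lambda>r. \<alpha>u r * exp (K - c * t))" by (rule continuous_on_mult_right[OF uc])
      show "(\<lambda>r. \<alpha>u r * exp (K - c * t)) ` {0..} \<subseteq> {0..}"
      proof (rule image_subsetI)
        fix r :: real assume "r \<in> {0..}"
        then have "0 \<le> \<alpha>u r" using upos by simp
        then show "\<alpha>u r * exp (K - c * t) \<in> {0..}" by simp
      qed
    qed
    show "\<beta> 0 t = 0" by (simp add: \<beta>_def u0 ai(5))
    show "strict_mono_on {0..} (\<lambda>r. \<beta> r t)"
    proof (rule strict_mono_onI)
      fix r s :: real assume rs: "r \<in> {0..}" "s \<in> {0..}" "r < s"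
      have "\<alpha>u r * exp (K - c * t) < \<alpha>u s * exp (K - c * t)"
        using strict_mono_onD[OF um rs] by simp
      then show "\<beta> r t < \<beta> s t" unfolding \<beta>_def
        using rs upos by (intro strict_mono_onD[OF ai(4)]) auto
    qed
  qed
  have KL2: "\<beta> r u \<le> \<beta> r s" if r: "0 \<le> r" and su: "0 \<le> s" "s \<le> u" for r s u
  proof -
    have "c * s \<le> c * u" using su c by (intro mult_left_mono) auto
    then have "exp (K - c * u) \<le> exp (K - c * s)" by simp
    then have "\<alpha>u r * exp (K - c * u) \<le> \<alpha>u r * exp (K - c * s)"
      using upos[OF r] by (rule mult_left_mono)
    then show "\<beta> r u \<le> \<beta> r s" unfolding \<beta>_def
      using upos[OF r] by (intro strict_mono_on_leD[OF ai(4)]) auto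
  qed
  have KL3: "(\<beta> r \<longlongrightarrow> 0) at_top" if r: "0 \<le> r" for r
  proof -
    have lim: "((\<lambda>s. \<alpha>u r * exp (K - c * s)) \<longlongrightarrow> 0) at_top"
      using c by real_asymp
    have "((\<lambda>s. ai (\<alpha>u r * exp (K - c * s))) \<longlongrightarrow> ai 0) at_top"
    proof (rule continuous_on_tendsto_compose[OF ai(3) lim])
      show "(0::real) \<in> {0..}" by simp
      have "\<alpha>u r * exp (K - c * s) \<in> {0..}" for s using upos[OF r] by simp
      then show "\<forall>\<^sub>F s in at_top. \<alpha>u r * exp (K - c * s) \<in> {0..}" by (intro always_eventually allI)
    qed
    then show "(\<beta> r \<longlongrightarrow> 0) at_top" by (simp add: \<beta>_def[abs_def] ai(5))
  qed
  have KL: "class_KL \<beta>" unfolding class_KL_def using KL1 KL2 KL3 by blast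
  show ?thesis
  proof (intro exI[of _ \<beta>] conjI KL allI impI)
    fix r t y :: real assume h: "0 \<le> r" "0 \<le> t" "0 \<le> y" "\<alpha>l y \<le> \<alpha>u r * exp (K - c * t)"
    have "ai (\<alpha>l y) \<le> ai (\<alpha>u r * exp (K - c * t))"
      using h upos[OF h(1)] lpos[OF h(3)] ai(1)[of y] by (intro strict_mono_on_leD[OF ai(4)]) auto
    then show "y \<le> \<beta> r t" using ai(2)[OF h(3)] by (simp add: \<beta>_def)
  qed
qed

theorem theorem5:
  fixes N :: nat
    and f :: "nat \<Rightarrow> 'a::euclidean_space \<Rightarrow> 'a"
    and PS PU :: "nat set"
    and E :: "(nat \<times> nat) set"
    and \<alpha>l \<alpha>u :: "real \<Rightarrow> real"
    and V :: "nat \<Rightarrow> 'a \<Rightarrow> real"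
    and lam :: "nat \<Rightarrow> real"
    and \<mu> :: "nat \<Rightarrow> nat \<Rightarrow> real"
    and \<sigma> :: "real \<Rightarrow> nat"
  assumes lip: "\<forall>i\<in>{1..N}. \<exists>L. L-lipschitz_on UNIV (f i)"
    and f0: "\<forall>i\<in>{1..N}. f i 0 = 0"
    and part: "PS \<union> PU = {1..N}" "PS \<inter> PU = {}"
    and E_sub: "E \<subseteq> {1..N} \<times> {1..N}"
    and A1_K: "class_Kinf \<alpha>l" "class_Kinf \<alpha>u"
    and A1_C1: "\<forall>i\<in>{1..N}. \<exists>D :: 'a \<Rightarrow> ('a \<Rightarrow>\<^sub>L real).
                   (\<forall>\<xi>. (V i has_derivative blinfun_apply (D \<xi>)) (at \<xi>)) \<and> continuous_on UNIV D"
    and A1_nonneg: "\<forall>i\<in>{1..N}. \<forall>\<xi>. V i \<xi> \<ge> 0"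
    and A1_lamS: "\<forall>i\<in>PS. lam i > 0"
    and A1_lamU: "\<forall>i\<in>PU. lam i < 0"
    and A1_sandwich: "\<forall>i\<in>{1..N}. \<forall>\<xi>. \<alpha>l (norm \<xi>) \<le> V i \<xi> \<and> V i \<xi> \<le> \<alpha>u (norm \<xi>)"
    and A1_decay: "\<forall>i\<in>{1..N}. \<forall>\<gamma>. ode_solution (f i) \<gamma> \<longrightarrow>
                    (\<forall>t\<ge>0. V i (\<gamma> t) \<le> V i (\<gamma> 0) * exp (- lam i * t))"
    and A2: "\<forall>(i,j)\<in>E. \<mu> i j \<ge> 1 \<and> (\<forall>\<xi>. V j \<xi> \<le> \<mu> i j * V i \<xi>)"
    and adm: "admissible_signal {1..N} E \<sigma>"
    and cond: "Limsup at_top (\<lambda>t. ereal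
                 (switch_freq \<sigma> t * (\<Sum>(k,l)\<in>E. ln (\<mu> k l) * trans_freq \<sigma> k l t)
                  - (\<Sum>j\<in>PS. \<bar>lam j\<bar> * activation_frac \<sigma> j t)
                  + (\<Sum>k\<in>PU. \<bar>lam k\<bar> * activation_frac \<sigma> k t))) < 0"
  shows "GAS f \<sigma>"
proof -
  have finE: "finite E" by (rule finite_subset[OF E_sub]) simp
  have finPS: "finite PS" by (rule finite_subset[of PS "{1..N}"]) (use part(1) in auto)
  have finPU: "finite PU" by (rule finite_subset[of PU "{1..N}"]) (use part(1) in auto)
  from bchoice[OF A1_C1] obtain DD where DD0: "\<forall>i\<in>{1..N}. (\<forall>\<xi>. (V i has_derivative blinfun_apply (DD i \<xi>)) (at \<xi>)) \<and> continuous_on UNIV (DD i)"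
    by (rule exE)
  have Vder: "(V i has_derivative blinfun_apply (DD i \<xi>)) (at \<xi>)" if "i \<in> {1..N}" for i \<xi>
    using DD0 that by blast
  have Vcont: "continuous_on UNIV (V i)" if "i \<in> {1..N}" for i
    by (rule continuous_at_imp_continuous_on) (use has_derivative_continuous[OF Vder[OF that]] in blast)
  have inf: "blinfun_apply (DD i \<xi>) (f i \<xi>) \<le> - lam i * V i \<xi>" if i: "i \<in> {1..N}" for i \<xi>
  proof -
    obtain L where L: "L-lipschitz_on UNIV (f i)" using lip i by blast
    show ?thesis
      by (rule infinitesimal[OF Vder[OF i] global_exist[OF L]]) (use A1_decay i in blast)
  qed
  have \<sigma>P: "\<sigma> t \<in> {1..N}" if "t \<ge> 0" for t by (rule adm_P[OF adm that])
  define Ns where "Ns t = (\<Sum>(k,l)\<in>E. ln (\<mu> k l) * real (num_switches_from_to \<sigma> k l t))" for t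
  define Ls where "Ls t = (\<Sum>j\<in>PS. \<bar>lam j\<bar> * activation_time \<sigma> j t) - (\<Sum>k\<in>PU. \<bar>lam k\<bar> * activation_time \<sigma> k t)" for t
  define B where "B t = Ns t - Ls t" for t
  have Lstep: "Ls v = Ls u + lam c * (v - u)"
    if uv: "0 \<le> u" "u \<le> v" and cN: "c \<in> {1..N}" and cc: "\<forall>r\<in>{u<..<v}. \<sigma> r = c" for u v c
  proof -
    have a: "activation_time \<sigma> j v = activation_time \<sigma> j u + (if c = j then v - u else 0)" for j
      by (rule act_step[OF adm uv cc])
    have s1: "(\<Sum>j\<in>S. \<bar>lam j\<bar> * activation_time \<sigma> j v) = (\<Sum>j\<in>S. \<bar>lam j\<bar> * activation_time \<sigma> j u)
         + (if c \<in> S then \<bar>lam c\<bar> * (v - u) else 0)" if "finite S" for S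
    proof -
      have "(\<Sum>j\<in>S. \<bar>lam j\<bar> * activation_time \<sigma> j v) = (\<Sum>j\<in>S. \<bar>lam j\<bar> * activation_time \<sigma> j u + (if c = j then \<bar>lam c\<bar> * (v - u) else 0))"
        by (rule sum.cong) (auto simp: a algebra_simps)
      also have "\<dots> = (\<Sum>j\<in>S. \<bar>lam j\<bar> * activation_time \<sigma> j u) + (\<Sum>j\<in>S. (if c = j then \<bar>lam c\<bar> * (v - u) else 0))"
        by (rule sum.distrib)
      also have "(\<Sum>j\<in>S. (if c = j then \<bar>lam c\<bar> * (v - u) else 0)) = (if c \<in> S then \<bar>lam c\<bar> * (v - u) else 0)"
        using that by (simp add: sum.delta)
      finally show ?thesis .
    qed
    have "Ls v = Ls u + ((if c \<in> PS then \<bar>lam c\<bar> * (v - u) else 0) - (if c \<in> PU then \<bar>lam c\<bar> * (v - u) else 0))"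
      unfolding Ls_def s1[OF finPS] s1[OF finPU] by simp
    also have "(if c \<in> PS then \<bar>lam c\<bar> * (v - u) else 0) - (if c \<in> PU then \<bar>lam c\<bar> * (v - u) else 0) = lam c * (v - u)"
    proof (cases "c \<in> PS")
      case True
      then have "c \<notin> PU" using part(2) by auto
      moreover have "lam c > 0" using True A1_lamS by auto
      ultimately show ?thesis using True by simp
    next
      case False
      then have "c \<in> PU" using part(1) cN by auto
      moreover have "lam c < 0" using \<open>c \<in> PU\<close> A1_lamU by auto
      ultimately show ?thesis using False by simp
    qed
    finally show ?thesis .
  qed
  have Nsame: "Ns v = Ns u" if "u \<le> v" "\<forall>r\<in>{u<..v}. \<not> is_switch \<sigma> r" for u v
  proof -
    have "num_switches_from_to \<sigma> k l v = num_switches_from_to \<sigma> k l u" for k l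
      by (rule nsw_same[OF that])
    then show ?thesis unfolding Ns_def by simp
  qed
  have Nstep: "Ns v = Ns u + (if is_switch \<sigma> v then ln (\<mu> (left_val \<sigma> v) (\<sigma> v)) else 0)"
    if uv: "0 \<le> u" "u < v" and ns: "\<forall>r\<in>{u<..<v}. \<not> is_switch \<sigma> r" for u v
  proof -
    define p0 where "p0 = (left_val \<sigma> v, \<sigma> v)"
    have n: "num_switches_from_to \<sigma> k l v = num_switches_from_to \<sigma> k l u
       + (if is_switch \<sigma> v \<and> left_val \<sigma> v = k \<and> \<sigma> v = l then 1 else 0)" for k l
      by (rule nsw_step[OF adm uv ns])
    have "Ns v = (\<Sum>p\<in>E. (case p of (k,l) \<Rightarrow> ln (\<mu> k l) * real (num_switches_from_to \<sigma> k l u))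
        + (if is_switch \<sigma> v \<and> p = p0 then ln (\<mu> (fst p) (snd p)) else 0))"
      unfolding Ns_def by (rule sum.cong) (auto simp: n p0_def algebra_simps split: if_splits)
    also have "\<dots> = Ns u + (\<Sum>p\<in>E. (if is_switch \<sigma> v \<and> p = p0 then ln (\<mu> (fst p) (snd p)) else 0))"
      unfolding Ns_def by (rule sum.distrib)
    also have "(\<Sum>p\<in>E. (if is_switch \<sigma> v \<and> p = p0 then ln (\<mu> (fst p) (snd p)) else 0))
        = (if is_switch \<sigma> v then ln (\<mu> (left_val \<sigma> v) (\<sigma> v)) else 0)"
    proof (cases "is_switch \<sigma> v")
      case True
      then have "p0 \<in> E" unfolding p0_def by (rule adm_E[OF adm])
      then show ?thesis using True finE by (simp add: sum.delta' p0_def)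
    qed simp
    finally show ?thesis .
  qed
  have act_le: "activation_time \<sigma> j t \<le> t" if "t \<ge> 0" for j t
  proof -
    have "activation_time \<sigma> j t \<le> measure lborel {0<..t}"
      unfolding activation_time_def
    proof (rule measure_mono_fmeasurable)
      show "{s \<in> {0<..t}. \<sigma> s = j} \<in> sets lborel" by (rule act_set_meas[OF adm])
      have "bounded {0<..t}" by (rule bounded_subset[of "{0..t}"]) auto
      then show "{0<..t} \<in> fmeasurable lborel" by (intro fmeasurableI emeasure_bounded_finite) auto
    qed auto
    then show ?thesis using that by simp
  qed
  have act_ge: "activation_time \<sigma> j t \<ge> 0" for j t by (simp add: activation_time_def)
  have nsw_mono: "num_switches_from_to \<sigma> k l t \<le> num_switches_from_to \<sigma> k l T" if "t \<le> T" for k l t T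
    unfolding num_switches_from_to_def
    by (rule card_mono, rule finite_subset[OF _ finite_switches[OF adm, of T]]) (use that in auto)
  have B0: "B 0 = 0" by (simp add: B_def Ns_def Ls_def num_switches_from_to_def activation_time_def)
  have main: "\<forall>t\<ge>0. V (\<sigma> t) (x t) \<le> V (\<sigma> 0) x0 * exp (B t)"
    if sol: "switched_solution f \<sigma> x0 x" for x0 x
  proof -
    have x0d: "x 0 = x0" and xc: "continuous_on {0..} x"
      and xd: "\<And>t. t \<ge> 0 \<Longrightarrow> (x has_vector_derivative f (\<sigma> t) (x t)) (at t within {t..})"
      using sol by (auto simp: switched_solution_def)
    define W where "W t = V (\<sigma> t) (x t)" for t
    define W0 where "W0 = V (\<sigma> 0) x0"
    define P where "P t \<longleftrightarrow> W t \<le> W0 * exp (B t)" for t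
    have P0: "P 0" by (simp add: P_def W_def W0_def B0 x0d)
    have W0pos: "W0 \<ge> 0" using A1_nonneg \<sigma>P[of 0] by (simp add: W0_def)
    have RX: "\<exists>e>0. \<forall>u\<in>{s..s+e}. P u" if s: "s \<ge> 0" and Ps: "P s" for s
    proof -
      obtain e where e: "e > 0" "\<forall>u\<in>{s..<s+e}. \<sigma> u = \<sigma> s" using adm_R[OF adm s] by blast
      define i where "i = \<sigma> s"
      have ei: "\<forall>u\<in>{s..<s+e}. \<sigma> u = i" unfolding i_def by (rule e(2))
      have iN: "i \<in> {1..N}" unfolding i_def by (rule \<sigma>P[OF s])
      have ei2: "\<forall>r\<in>{s<..<s+e}. \<sigma> r = i"
      proof
        fix r assume "r \<in> {s<..<s+e}"
        then have "r \<in> {s..<s+e}" by simp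
        then show "\<sigma> r = i" using ei by blast
      qed
      show ?thesis
      proof (intro exI[of _ "e/2"] conjI ballI)
        show "e/2 > 0" using e by simp
        fix u assume u: "u \<in> {s..s+e/2}"
        have \<sigma>u: "\<sigma> u = i" using ei u e(1) by auto
        have gc: "continuous_on {s..u} (\<lambda>v. V i (x v) * exp (lam i * (v - s)))"
        proof (intro continuous_intros)
          show "continuous_on {s..u} (\<lambda>v. V i (x v))"
            by (rule continuous_on_compose2[OF Vcont[OF iN] continuous_on_subset[OF xc]]) (use s in auto)
        qed
        have "V i (x u) * exp (lam i * (u - s)) \<le> V i (x s) * exp (lam i * (s - s))"
        proof (rule mono_right[OF _ gc])
          show "s \<le> u" using u by simp
          fix v assume v: "v \<in> {s..<u}"
          have v0: "v \<ge> 0" using v s by auto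
          have \<sigma>v: "\<sigma> v = i" using ei v u e(1) by auto
          have dx: "(x has_vector_derivative f i (x v)) (at v within {v..})" using xd[OF v0] \<sigma>v by simp
          have "((V i \<circ> x) has_vector_derivative blinfun_apply (DD i (x v)) (f i (x v))) (at v within {v..})"
            by (rule vector_derivative_diff_chain_within[OF dx has_derivative_at_withinI[OF Vder[OF iN]]])
          then have dV: "((\<lambda>v. V i (x v)) has_real_derivative blinfun_apply (DD i (x v)) (f i (x v))) (at v within {v..})"
            unfolding has_real_derivative_iff_has_vector_derivative by (simp add: o_def)
          have dE: "((\<lambda>v. exp (lam i * (v - s))) has_real_derivative exp (lam i * (v - s)) * lam i) (at v within {v..})"
            by (auto intro!: derivative_eq_intros)
          have "((\<lambda>v. V i (x v) * exp (lam i * (v - s))) has_real_derivative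
              (blinfun_apply (DD i (x v)) (f i (x v)) * exp (lam i * (v - s)) + exp (lam i * (v - s)) * lam i * V i (x v)))
              (at v within {v..})"
            by (rule DERIV_mult[OF dV dE])
          moreover have "blinfun_apply (DD i (x v)) (f i (x v)) * exp (lam i * (v - s)) + exp (lam i * (v - s)) * lam i * V i (x v)
              = exp (lam i * (v - s)) * (blinfun_apply (DD i (x v)) (f i (x v)) + lam i * V i (x v))"
            by (simp add: algebra_simps)
          moreover have "exp (lam i * (v - s)) * (blinfun_apply (DD i (x v)) (f i (x v)) + lam i * V i (x v)) \<le> 0"
            using inf[OF iN, of "x v"] by (intro mult_nonneg_nonpos) auto
          ultimately show "\<exists>d. ((\<lambda>v. V i (x v) * exp (lam i * (v - s))) has_real_derivative d) (at v within {v..}) \<and> d \<le> 0"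
            by auto
        qed
        then have h: "V i (x u) * exp (lam i * (u - s)) \<le> V i (x s)" by simp
        have "V i (x u) = V i (x u) * exp (lam i * (u - s)) * exp (- (lam i * (u - s)))"
          by (simp add: mult.assoc exp_add[symmetric])
        also have "\<dots> \<le> V i (x s) * exp (- (lam i * (u - s)))"
          using h by (rule mult_right_mono) simp
        finally have Vu: "V i (x u) \<le> V i (x s) * exp (- (lam i * (u - s)))" .
        have ns: "\<forall>r\<in>{s<..u}. \<not> is_switch \<sigma> r"
        proof
          fix r assume r: "r \<in> {s<..u}"
          show "\<not> is_switch \<sigma> r" by (rule const_no_switch[OF ei2]) (use r u e(1) in auto)
        qed
        have Nu: "Ns u = Ns s" by (rule Nsame[OF _ ns]) (use u in auto)
        have Lu: "Ls u = Ls s + lam i * (u - s)"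
        proof (rule Lstep[OF s _ iN])
          show "s \<le> u" using u by simp
          show "\<forall>r\<in>{s<..<u}. \<sigma> r = i" using ei2 u e(1) by auto
        qed
        have Bu: "B u = B s - lam i * (u - s)" by (simp add: B_def Nu Lu)
        have "W u = V i (x u)" by (simp add: W_def \<sigma>u)
        also have "\<dots> \<le> V i (x s) * exp (- (lam i * (u - s)))" by (rule Vu)
        also have "V i (x s) = W s" by (simp add: W_def i_def)
        also have "W s * exp (- (lam i * (u - s))) \<le> W0 * exp (B s) * exp (- (lam i * (u - s)))"
          using Ps by (intro mult_right_mono) (auto simp: P_def)
        also have "\<dots> = W0 * exp (B u)" by (simp add: Bu mult.assoc exp_add[symmetric])
        finally show "P u" by (simp add: P_def)
      qed
    qed
    have LX: "P s" if s: "s > 0" and Pl: "\<forall>u\<in>{0..<s}. P u" for s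
    proof -
      obtain e c where e: "e > 0" "\<forall>u\<in>{s-e<..<s}. \<sigma> u = c" using adm_L[OF adm s] by blast
      define a where "a = max 0 (s - e)"
      have a: "0 \<le> a" "a < s" using s e by (auto simp: a_def)
      have ac: "\<forall>r\<in>{a<..<s}. \<sigma> r = c" using e(2) by (auto simp: a_def)
      have cN: "c \<in> {1..N}"
      proof -
        have "\<sigma> ((a + s)/2) = c" using ac a by auto
        moreover have "\<sigma> ((a + s)/2) \<in> {1..N}" using a by (intro \<sigma>P) auto
        ultimately show ?thesis by simp
      qed
      have lv: "left_val \<sigma> s = c" by (rule left_val_eq[OF e])
      have ns: "\<forall>r\<in>{a<..<s}. \<not> is_switch \<sigma> r" using const_no_switch[OF ac] by blast
      define \<delta> where "\<delta> = (if is_switch \<sigma> s then ln (\<mu> c (\<sigma> s)) else 0)"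
      have Bu: "B u = B s - \<delta> + lam c * (s - u)" if u: "u \<in> {a<..<s}" for u
      proof -
        have "Ns s = Ns u + \<delta>" unfolding \<delta>_def lv[symmetric]
          by (rule Nstep) (use u a ns in auto)
        moreover have "Ls s = Ls u + lam c * (s - u)"
          by (rule Lstep[OF _ _ cN]) (use u a ac in auto)
        ultimately show ?thesis by (simp add: B_def algebra_simps)
      qed
      have ineq: "V c (x u) \<le> W0 * exp (B s - \<delta> + lam c * (s - u))" if u: "u \<in> {a<..<s}" for u
      proof -
        have "P u" using Pl u a by auto
        moreover have "\<sigma> u = c" using ac u by blast
        ultimately show ?thesis using Bu[OF u] by (simp add: P_def W_def)
      qed
      have lim1: "((\<lambda>u. V c (x u)) \<longlongrightarrow> V c (x s)) (at_left s)"
      proof -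
        have "isCont x s" using continuous_on_interior[OF xc, of s] s by simp
        moreover have "isCont (V c) (x s)" using Vcont[OF cN] by (simp add: continuous_on_eq_continuous_at)
        ultimately have "isCont (\<lambda>u. V c (x u)) s" by (rule isCont_o2)
        then have "((\<lambda>u. V c (x u)) \<longlongrightarrow> V c (x s)) (at s)" by (simp add: isCont_def)
        then show ?thesis by (rule tendsto_within_subset) simp
      qed
      have lim2: "((\<lambda>u. W0 * exp (B s - \<delta> + lam c * (s - u))) \<longlongrightarrow> W0 * exp (B s - \<delta> + lam c * (s - s))) (at_left s)"
        by (intro tendsto_intros)
      have ev: "eventually (\<lambda>u. V c (x u) \<le> W0 * exp (B s - \<delta> + lam c * (s - u))) (at_left s)"
        using eventually_at_left_real[OF a(2)] by eventually_elim (rule ineq)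
      have Vs: "V c (x s) \<le> W0 * exp (B s - \<delta>)"
        using tendsto_le[OF trivial_limit_at_left_real lim2 lim1 ev] by simp
      show "P s"
      proof (cases "is_switch \<sigma> s")
        case True
        have cE: "(c, \<sigma> s) \<in> E" using adm_E[OF adm True] lv by simp
        then have m1: "\<mu> c (\<sigma> s) \<ge> 1" and mV: "V (\<sigma> s) (x s) \<le> \<mu> c (\<sigma> s) * V c (x s)"
          using A2 by auto
        have "W s \<le> \<mu> c (\<sigma> s) * V c (x s)" using mV by (simp add: W_def)
        also have "\<dots> \<le> \<mu> c (\<sigma> s) * (W0 * exp (B s - \<delta>))" using Vs m1 by (intro mult_left_mono) auto
        also have "\<dots> = W0 * exp (B s)"
          using m1 True by (simp add: \<delta>_def exp_diff)
        finally show ?thesis by (simp add: P_def)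
      next
        case False
        then have "\<sigma> s = c" using lv s by (simp add: is_switch_def)
        then show ?thesis using Vs False by (simp add: P_def W_def \<delta>_def)
      qed
    qed
    have PT: "P T" if T: "T \<ge> 0" for T
    proof -
      define S where "S = {t\<in>{0..T}. \<forall>u\<in>{0..t}. P u}"
      have S0: "0 \<in> S" using P0 T by (auto simp: S_def)
      have bdd: "bdd_above S" by (auto simp: S_def bdd_above_def)
      define s where "s = Sup S"
      have s0: "0 \<le> s" unfolding s_def using S0 bdd by (rule cSup_upper)
      have sT: "s \<le> T" unfolding s_def using S0 by (intro cSup_least) (auto simp: S_def)
      have A: "P u" if "u \<in> {0..<s}" for u
      proof -
        have "u < Sup S" using that by (simp add: s_def)
        then obtain t where "t \<in> S" "u < t" using less_cSup_iff[OF _ bdd] S0 by blast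
        then show ?thesis using that by (auto simp: S_def)
      qed
      have Ps: "P s"
      proof (cases "s = 0")
        case True then show ?thesis using P0 by simp
      next
        case False then show ?thesis using LX[of s] A s0 by simp
      qed
      have "s = T"
      proof (rule ccontr)
        assume "s \<noteq> T"
        then have sT': "s < T" using sT by simp
        obtain e where e: "e > 0" "\<forall>u\<in>{s..s+e}. P u" using RX[OF s0 Ps] by blast
        define t' where "t' = min (s + e) T"
        have "t' \<in> S" unfolding S_def
        proof (intro CollectI conjI ballI)
          show "t' \<in> {0..T}" using s0 sT' e by (auto simp: t'_def)
          fix u assume u: "u \<in> {0..t'}"
          show "P u"
          proof (cases "u < s")
            case True then show ?thesis using A u by auto
          next
            case False then show ?thesis using e(2) u by (auto simp: t'_def)
          qed
        qed
        then have "t' \<le> s" unfolding s_def using bdd by (rule cSup_upper)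
        then show False using sT' e by (auto simp: t'_def)
      qed
      then show ?thesis using Ps by simp
    qed
    show ?thesis using PT by (simp add: P_def W_def W0_def)
  qed
  define ex where "ex t = switch_freq \<sigma> t * (\<Sum>(k,l)\<in>E. ln (\<mu> k l) * trans_freq \<sigma> k l t)
                  - (\<Sum>j\<in>PS. \<bar>lam j\<bar> * activation_frac \<sigma> j t)
                  + (\<Sum>k\<in>PU. \<bar>lam k\<bar> * activation_frac \<sigma> k t)" for t
  have exB: "ex t = B t / t" if t: "t > 0" for t
  proof -
    have n1: "switch_freq \<sigma> t * (\<Sum>(k,l)\<in>E. ln (\<mu> k l) * trans_freq \<sigma> k l t) = Ns t / t"
    proof (cases "num_switches \<sigma> t = 0")
      case True
      have z: "num_switches_from_to \<sigma> k l t = 0" for k l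
      proof -
        have "num_switches_from_to \<sigma> k l t \<le> num_switches \<sigma> t"
          unfolding num_switches_from_to_def num_switches_def
          by (rule card_mono[OF finite_switches[OF adm]]) auto
        then show ?thesis using True by simp
      qed
      show ?thesis using True by (simp add: switch_freq_def Ns_def z)
    next
      case False
      have "(\<Sum>(k,l)\<in>E. ln (\<mu> k l) * trans_freq \<sigma> k l t) = Ns t / real (num_switches \<sigma> t)"
        unfolding Ns_def trans_freq_def sum_divide_distrib by (rule sum.cong) auto
      then show ?thesis using False t by (simp add: switch_freq_def)
    qed
    have n2: "(\<Sum>j\<in>S. \<bar>lam j\<bar> * activation_frac \<sigma> j t) = (\<Sum>j\<in>S. \<bar>lam j\<bar> * activation_time \<sigma> j t) / t" for S
      unfolding activation_frac_def sum_divide_distrib by simp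
    show ?thesis unfolding ex_def n1 n2 B_def Ls_def using t by (simp add: field_simps)
  qed
  have cond': "Limsup at_top (\<lambda>t. ereal (ex t)) < 0" unfolding ex_def by (rule cond)
  from ereal_dense2[OF cond'] obtain r where r: "Limsup at_top (\<lambda>t. ereal (ex t)) < ereal r" "ereal r < 0"
    by blast
  have "eventually (\<lambda>t. ereal (ex t) < ereal r) at_top" by (rule Limsup_lessD[OF r(1)])
  then obtain T0 where T0: "\<And>t. t \<ge> T0 \<Longrightarrow> ex t < r" by (auto simp: eventually_at_top_linorder)
  define T1 where "T1 = max T0 1"
  define cc where "cc = - r"
  have cc: "cc > 0" using r(2) by (simp add: cc_def)
  have T1p: "T1 > 0" by (simp add: T1_def)
  define M where "M = (\<Sum>(k,l)\<in>E. \<bar>ln (\<mu> k l)\<bar> * real (num_switches_from_to \<sigma> k l T1)) + (\<Sum>k\<in>PU. \<bar>lam k\<bar>) * T1"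
  have Mpos: "M \<ge> 0" unfolding M_def
    by (intro add_nonneg_nonneg mult_nonneg_nonneg sum_nonneg) (use T1p in \<open>auto split: prod.splits\<close>)
  have Bsmall: "B t \<le> M" if t: "0 \<le> t" "t \<le> T1" for t
  proof -
    have "Ns t \<le> (\<Sum>(k,l)\<in>E. \<bar>ln (\<mu> k l)\<bar> * real (num_switches_from_to \<sigma> k l T1))"
      unfolding Ns_def
    proof (rule sum_mono)
      fix p assume "p \<in> E"
      obtain k l where p: "p = (k,l)" by (cases p)
      have "ln (\<mu> k l) * real (num_switches_from_to \<sigma> k l t) \<le> \<bar>ln (\<mu> k l)\<bar> * real (num_switches_from_to \<sigma> k l t)"
        by (rule mult_right_mono) auto
      also have "\<dots> \<le> \<bar>ln (\<mu> k l)\<bar> * real (num_switches_from_to \<sigma> k l T1)"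
        using nsw_mono[OF t(2), of k l] by (intro mult_left_mono) auto
      finally show "(case p of (k,l) \<Rightarrow> ln (\<mu> k l) * real (num_switches_from_to \<sigma> k l t))
          \<le> (case p of (k,l) \<Rightarrow> \<bar>ln (\<mu> k l)\<bar> * real (num_switches_from_to \<sigma> k l T1))" by (simp add: p)
    qed
    moreover have "- Ls t \<le> (\<Sum>k\<in>PU. \<bar>lam k\<bar>) * T1"
    proof -
      have "(\<Sum>k\<in>PU. \<bar>lam k\<bar> * activation_time \<sigma> k t) \<le> (\<Sum>k\<in>PU. \<bar>lam k\<bar> * T1)"
      proof (rule sum_mono, rule mult_left_mono)
        fix k show "activation_time \<sigma> k t \<le> T1" using act_le[OF t(1), of k] t by simp
      qed simp
      moreover have "0 \<le> (\<Sum>j\<in>PS. \<bar>lam j\<bar> * activation_time \<sigma> j t)"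
        by (intro sum_nonneg mult_nonneg_nonneg act_ge) auto
      ultimately show ?thesis by (simp add: Ls_def sum_distrib_right)
    qed
    ultimately show ?thesis by (simp add: B_def M_def)
  qed
  define K where "K = M + cc * T1"
  have Bbound: "B t \<le> K - cc * t" if t0: "t \<ge> 0" for t
  proof (cases "t \<le> T1")
    case True
    have "cc * t \<le> cc * T1" using True cc by (intro mult_left_mono) auto
    then show ?thesis using Bsmall[OF t0 True] by (simp add: K_def)
  next
    case False
    then have t: "t > 0" "t \<ge> T0" by (auto simp: T1_def)
    have "B t / t < r" using exB[OF t(1)] T0[OF t(2)] by simp
    then have "B t < r * t" using t(1) by (simp add: divide_less_eq)
    moreover have "0 \<le> K" using Mpos cc T1p by (simp add: K_def)
    ultimately show ?thesis by (simp add: cc_def)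
  qed
  obtain \<beta> where \<beta>: "class_KL \<beta>"
    "\<forall>r t y. r \<ge> 0 \<longrightarrow> t \<ge> 0 \<longrightarrow> y \<ge> 0 \<longrightarrow> \<alpha>l y \<le> \<alpha>u r * exp (K - cc * t) \<longrightarrow> y \<le> \<beta> r t"
    using KL_build[OF A1_K cc, of K] by blast
  show ?thesis unfolding GAS_def
  proof (intro exI[of _ \<beta>] conjI \<beta>(1) allI impI)
    fix x0 x and t :: real assume sol: "switched_solution f \<sigma> x0 x" and t: "0 \<le> t"
    have m: "V (\<sigma> t) (x t) \<le> V (\<sigma> 0) x0 * exp (B t)" using main[OF sol] t by blast
    have s0: "\<sigma> 0 \<in> {1..N}" and st: "\<sigma> t \<in> {1..N}" using \<sigma>P t by auto
    have au0: "0 \<le> \<alpha>u (norm x0)" using A1_sandwich A1_nonneg s0 by (meson order_trans)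
    have "\<alpha>l (norm (x t)) \<le> V (\<sigma> t) (x t)" using A1_sandwich st by blast
    also have "\<dots> \<le> V (\<sigma> 0) x0 * exp (B t)" by (rule m)
    also have "\<dots> \<le> \<alpha>u (norm x0) * exp (B t)" using A1_sandwich s0 by (intro mult_right_mono) auto
    also have "\<dots> \<le> \<alpha>u (norm x0) * exp (K - cc * t)"
      using Bbound[OF t] au0 by (intro mult_left_mono) auto
    finally show "norm (x t) \<le> \<beta> (norm x0) t" using \<beta>(2) t by auto
  qed
qed
end
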